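(* Let $A\in\mathbb{R}^{n\times n}$ and $B\in\mathbb{R}^{n\times m}$ define the discrete-time system $x^+=Ax+Bu$. Let $\mathrm{S}\in\mathbb{R}^{n_s\times n}$ be such that $\mathcal{S}:=\{x\in\mathbb{R}^n:\mathrm{S}x\le \mathbf{1}\}$ is a C-set, and let $\mathrm{U}\in\mathbb{R}^{n_u\times m}$ be such that $\mathcal{U}:=\{u\in\mathbb{R}^m:\mathrm{U}u\le\mathbf{1}\}$ (a polyhedral convex set containing the origin in its interior). Let $u_d(0),\dots,u_d(T-1)$ be an input sequence and $x_d(0),\dots,x_d(T)$ the corresponding states with $x_d(k+1)=Ax_d(k)+Bu_d(k)$, and set $U_{0,T}:=[u_d(0)\ \cdots\ u_d(T-1)]$, $X_{0,T}:=[x_d(0)\ \cdots\ x_d(T-1)]$, $X_{1,T}:=[x_d(1)\ \cdots\ x_d(T)]$. If there exist $\lambda\in\mathbb{R}$, $G_K\in\mathbb{R}^{T\times n}$ and $P\in\mathbb{R}^{n_s\times n_s}$ with $P\ge0$ solving the problem of minimizing $\lambda$ subject to $0\le\lambda<1$, $P\mathbf{1}\le\lambda\mathbf{1}$, $P\mathrm{S}=\mathrm{S}X_{1,T}G_K$, $\mathrm{U}U_{0,T}G_Ks\le\mathbf{1}$ for all vertices $s$ of $\mathcal{S}$, and $I_n=X_{0,T}G_K$, then the controller $K=U_{0,T}G_K$ ensures that $\mathcal{S}$ is $\lambda$-contractive for $x^+=(A+BK)x$ and admissible for $\mathcal{U}$.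
   Context: $\mathbf{1}$ denotes the vector of all ones of appropriate dimension; inequalities between vectors/matrices are entrywise. A C-set is a convex compact subset of $\mathbb{R}^n$ containing the origin as an interior point. For $\mu\ge0$, $\mu\mathcal{S}:=\{\mu x:x\in\mathcal{S}\}$. A C-set $\mathcal{S}$ is $\lambda$-contractive for $x^+=Fx$ (with $\lambda\in[0,1)$) if for each $x\in\mathcal{S}$, $\inf\{\lambda'\ge0: Fx\in\lambda'\mathcal{S}\}\le\lambda$. $\mathcal{S}$ is admissible for $\mathcal{U}$ (with gain $K$) if $Kx\in\mathcal{U}$ for every $x\in\mathcal{S}$. *)

theory Defs
  imports "HOL-Analysis.Analysis"
begin

text \<open>All-ones vector of appropriate dimension; inequalities on vectors/matrices
  (type real^'a, real^'a^'b) are entrywise (library order less_eq_vec).\<close>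
definition ones :: "real^'a" where "ones = vec 1"

definition C_set :: "(real^'n) set \<Rightarrow> bool" where
  "C_set S \<longleftrightarrow> convex S \<and> compact S \<and> 0 \<in> interior S"

definition scaled_set :: "real \<Rightarrow> (real^'n) set \<Rightarrow> (real^'n) set" where
  "scaled_set \<mu> S = (\<lambda>x. \<mu> *\<^sub>R x) ` S"

definition contractive :: "real \<Rightarrow> (real^'n) set \<Rightarrow> (real^'n \<Rightarrow> real^'n) \<Rightarrow> bool" where
  "contractive lam S F \<longleftrightarrow> C_set S \<and> 0 \<le> lam \<and> lam < 1 \<and>
     (\<forall>x\<in>S. Inf {lam'. lam' \<ge> 0 \<and> F x \<in> scaled_set lam' S} \<le> lam)"

definition admissible :: "(real^'n) set \<Rightarrow> (real^'m) set \<Rightarrow> real^'n^'m \<Rightarrow> bool" where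
  "admissible S U K \<longleftrightarrow> (\<forall>x\<in>S. K *v x \<in> U)"

text \<open>Data matrices; columns indexed by the finite type 't, column j corresponding
  to time idx j, where idx enumerates 't as 0..T-1.\<close>
definition U0T :: "(nat \<Rightarrow> real^'m) \<Rightarrow> ('t \<Rightarrow> nat) \<Rightarrow> real^'t^'m" where
  "U0T ud idx = (\<chi> i j. ud (idx j) $ i)"
definition X0T :: "(nat \<Rightarrow> real^'n) \<Rightarrow> ('t \<Rightarrow> nat) \<Rightarrow> real^'t^'n" where
  "X0T xd idx = (\<chi> i j. xd (idx j) $ i)"
definition X1T :: "(nat \<Rightarrow> real^'n) \<Rightarrow> ('t \<Rightarrow> nat) \<Rightarrow> real^'t^'n" where
  "X1T xd idx = (\<chi> i j. xd (Suc (idx j)) $ i)"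

definition feasible ::
  "real^'n^'s \<Rightarrow> real^'m^'u \<Rightarrow> real^'t^'m \<Rightarrow> real^'t^'n \<Rightarrow> real^'t^'n
   \<Rightarrow> real \<Rightarrow> real^'n^'t \<Rightarrow> real^'s^'s \<Rightarrow> bool" where
  "feasible Sm Um U0 X0 X1 lam GK P \<longleftrightarrow>
     0 \<le> P \<and> 0 \<le> lam \<and> lam < 1 \<and> P *v ones \<le> lam *\<^sub>R ones \<and>
     P ** Sm = Sm ** X1 ** GK \<and>
     (\<forall>s. s extreme_point_of {x. Sm *v x \<le> ones} \<longrightarrow> Um *v ((U0 ** GK) *v s) \<le> ones) \<and>
     mat 1 = X0 ** GK"

end

theory Submission
  imports Defs
begin

lemma mono_nonneg_mat:
  fixes P :: "real^'s^'r"
  assumes "0 \<le> P" "a \<le> b"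
  shows "P *v a \<le> P *v b"
proof -
  have "\<And>i. (\<Sum>j\<in>UNIV. P$i$j * a$j) \<le> (\<Sum>j\<in>UNIV. P$i$j * b$j)"
  proof -
    fix i
    show "(\<Sum>j\<in>UNIV. P$i$j * a$j) \<le> (\<Sum>j\<in>UNIV. P$i$j * b$j)"
    proof (rule sum_mono)
      fix j
      have "0 \<le> P$i$j" using assms(1) by (simp add: less_eq_vec_def)
      moreover have "a$j \<le> b$j" using assms(2) by (simp add: less_eq_vec_def)
      ultimately show "P$i$j * a$j \<le> P$i$j * b$j" by (simp add: mult_left_mono)
    qed
  qed
  then show ?thesis by (simp add: less_eq_vec_def matrix_vector_mult_def)
qed

lemma mat_add_rdist: "((A::real^'n^'m) + B) ** (C::real^'p^'n) = A ** C + B ** C"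
  by (vector matrix_matrix_mult_def sum.distrib[symmetric] field_simps)

lemma scale_mem:
  fixes Sm :: "real^'n^'s"
  assumes "Sm *v y \<le> mu *\<^sub>R ones" "mu > 0"
  shows "y \<in> scaled_set mu {x. Sm *v x \<le> ones}"
proof -
  have "Sm *v (inverse mu *\<^sub>R y) \<le> ones"
    using assms by (simp add: matrix_vector_mult_scaleR less_eq_vec_def ones_def field_simps)
  moreover have "y = mu *\<^sub>R (inverse mu *\<^sub>R y)" using assms by simp
  ultimately show ?thesis unfolding scaled_set_def by blast
qed

lemma convex_polyhedron:
  fixes M :: "real^'n^'s"
  shows "convex {x. M *v x \<le> ones}"
proof (rule convexI)
  fix x y :: "real^'n" and u v :: real
  assume x: "x \<in> {x. M *v x \<le> ones}" and y: "y \<in> {x. M *v x \<le> ones}"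
    and "0 \<le> u" "0 \<le> v" "u + v = 1"
  then have uv: "0 \<le> u \<and> 0 \<le> v \<and> u + v = 1" by simp
  have eq: "M *v (u *\<^sub>R x + v *\<^sub>R y) = u *\<^sub>R (M *v x) + v *\<^sub>R (M *v y)"
    by (simp add: matrix_vector_right_distrib matrix_vector_mult_scaleR)
  have h: "\<And>i. u * (M *v x)$i + v * (M *v y)$i \<le> 1"
  proof -
    fix i
    have "(M *v x)$i \<le> 1" "(M *v y)$i \<le> 1" using x y by (auto simp: less_eq_vec_def ones_def)
    then have "u * (M *v x)$i \<le> u" "v * (M *v y)$i \<le> v" using uv
      by (simp_all add: mult_left_le)
    then show "u * (M *v x)$i + v * (M *v y)$i \<le> 1" using uv by linarith
  qed
  show "u *\<^sub>R x + v *\<^sub>R y \<in> {x. M *v x \<le> ones}"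
    unfolding mem_Collect_eq eq less_eq_vec_def ones_def using h by simp
qed

theorem corollary1:
  fixes A :: "real^'n^'n" and B :: "real^'m^'n"
    and Sm :: "real^'n^'s" and Um :: "real^'m^'u"
    and xd :: "nat \<Rightarrow> real^'n" and ud :: "nat \<Rightarrow> real^'m"
    and idx :: "'t::finite \<Rightarrow> nat"
    and lam :: real and GK :: "real^'n^'t" and P :: "real^'s^'s"
  assumes Cset: "C_set {x. Sm *v x \<le> ones}"
    and idx: "bij_betw idx UNIV {..<CARD('t)}"
    and dyn: "\<And>k. k < CARD('t) \<Longrightarrow> xd (Suc k) = A *v xd k + B *v ud k"
    and feas: "feasible Sm Um (U0T ud idx) (X0T xd idx) (X1T xd idx) lam GK P"
    and opt: "\<And>lam' GK' P'. feasible Sm Um (U0T ud idx) (X0T xd idx) (X1T xd idx) lam' GK' P'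
                 \<Longrightarrow> lam \<le> lam'"
  shows "contractive lam {x. Sm *v x \<le> ones} (\<lambda>x. (A + B ** (U0T ud idx ** GK)) *v x)
       \<and> admissible {x. Sm *v x \<le> ones} {u. Um *v u \<le> ones} (U0T ud idx ** GK)"
proof -
  define S where "S = {x. Sm *v x \<le> ones}"
  define K where "K = U0T ud idx ** GK"
  define F where "F = A + B ** K"
  have P0: "0 \<le> P" and l0: "0 \<le> lam" and l1: "lam < 1" and P1: "P *v ones \<le> lam *\<^sub>R ones"
    and PS: "P ** Sm = Sm ** X1T xd idx ** GK"
    and ext: "\<And>s. s extreme_point_of S \<Longrightarrow> Um *v (K *v s) \<le> ones"
    and X0G: "mat 1 = X0T xd idx ** GK"
    using feas unfolding feasible_def S_def K_def by auto
  have X1: "X1T xd idx = A ** X0T xd idx + B ** U0T ud idx"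
  proof -
    have "\<And>j. idx j < CARD('t)" using idx by (auto simp: bij_betw_def)
    then have "\<And>i j. xd (Suc (idx j)) $ i = (A *v xd (idx j)) $ i + (B *v ud (idx j)) $ i"
      using dyn by simp
    then show ?thesis
      by (simp add: X1T_def X0T_def U0T_def vec_eq_iff matrix_matrix_mult_def
          matrix_vector_mult_def)
  qed
  have X1G: "X1T xd idx ** GK = F"
    unfolding X1 F_def K_def
    by (simp add: mat_add_rdist matrix_mul_assoc[symmetric] X0G[symmetric])
  have key: "\<And>x. Sm *v (F *v x) = P *v (Sm *v x)"
    by (simp add: matrix_vector_mul_assoc PS X1G matrix_mul_assoc[symmetric])
  have contr: "\<forall>x\<in>S. Inf {lam'. lam' \<ge> 0 \<and> F *v x \<in> scaled_set lam' S} \<le> lam"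
  proof
    fix x assume "x \<in> S"
    then have "Sm *v x \<le> ones" by (simp add: S_def)
    then have b: "Sm *v (F *v x) \<le> lam *\<^sub>R ones"
      using key mono_nonneg_mat[OF P0] P1 by (metis order_trans)
    define L where "L = {lam'. lam' \<ge> 0 \<and> F *v x \<in> scaled_set lam' S}"
    have inL: "mu \<in> L" if "mu > lam" for mu
    proof -
      have "lam *\<^sub>R ones \<le> mu *\<^sub>R (ones :: real^'s)"
        using that by (simp add: less_eq_vec_def ones_def)
      then have "Sm *v (F *v x) \<le> mu *\<^sub>R ones" using b by (metis order_trans)
      then show ?thesis using scale_mem[of Sm "F *v x" mu] that l0 unfolding L_def S_def by auto
    qed
    have bdd: "bdd_below L" unfolding L_def by (rule bdd_belowI[of _ 0]) auto
    show "Inf L \<le> lam"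
    proof (rule ccontr)
      assume "\<not> Inf L \<le> lam"
      then have "(lam + Inf L)/2 \<in> L" by (intro inL) auto
      then have "Inf L \<le> (lam + Inf L)/2" using bdd by (rule cInf_lower)
      then show False using \<open>\<not> Inf L \<le> lam\<close> by (simp add: field_simps)
    qed
  qed
  have adm: "\<forall>x\<in>S. Um *v (K *v x) \<le> ones"
  proof -
    have cc: "compact S" "convex S" using Cset unfolding C_set_def S_def by auto
    have cvx: "convex {x. (Um ** K) *v x \<le> ones}" by (rule convex_polyhedron)
    have "{x. x extreme_point_of S} \<subseteq> {x. (Um ** K) *v x \<le> ones}"
      using ext by (auto simp: matrix_vector_mul_assoc)
    then have "convex hull {x. x extreme_point_of S} \<subseteq> {x. (Um ** K) *v x \<le> ones}"
      using cvx by (simp add: hull_minimal)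
    then have "S \<subseteq> {x. (Um ** K) *v x \<le> ones}"
      using Krein_Milman_Minkowski[OF cc] by simp
    then show ?thesis by (auto simp: matrix_vector_mul_assoc)
  qed
  show ?thesis
    using Cset l0 l1 contr adm
    unfolding contractive_def admissible_def S_def[symmetric] F_def[symmetric] K_def[symmetric]
    by auto
qed

end
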